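(* Let $n,m,n_f,\ell\in\mathbb{N}$, let $w>1$ be a number representable with $n$ bits of which the first $m$ are its integer part, let $F\in[0,1]$, and let $f\in[0,1]$ be given with $n_f$ bits after the binary point such that $|F-f|\leq 2^{-n_f}$. Then the value $\hat{z}$ returned by Algorithm FractionalPower$(w,f,n,m,n_f,\ell)$ (described in the context) satisfies $$|\hat{z}-w^F|\leq\left(\frac12\right)^{\ell-1}+\frac{w\ln w}{2^{n_f}}.$$
   Context: Fixed precision representation: a number $w\ge 0$ "given by $n$ bits of which the first $m$ correspond to its integer part" means $w=\sum_{j=m-n}^{m-1} w^{(j)}2^j$ with $w^{(j)}\in\{0,1\}$. For $x\geq 0$, "truncating $x$ to $b$ bits after the binary point" means replacing $x$ by $\lfloor 2^b x\rfloor/2^b$. All arithmetic inside a step is performed exactly; only the stated truncations introduce error. Algorithm SQRT$(w,n,m,b)$ (input $w\geq 1$): if $w=1$, return $1$. Otherwise: let $p\in\mathbb{N}$ with $2^{p}>w\geq 2^{p-1}$ and set $\hat{x}_0=2^{-p}$; let $s=\lceil\log_2 b\rceil$; for $i=1,\dots,s$ compute exactly $x_i=-w\hat{x}_{i-1}^2+2\hat{x}_{i-1}$ and let $\hat{x}_i$ be $x_i$ truncated to $b$ bits. Then let $q\in\mathbb{N}$ with $2^{1-q}>\hat{x}_s\geq 2^{-q}$ and set $\hat{y}_0=2^{\lfloor (q-1)/2\rfloor}$; for $j=1,\dots,s$ compute exactly $y_j=\frac12(3\hat{y}_{j-1}-\hat{x}_s\hat{y}_{j-1}^3)$ and let $\hat{y}_j$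 be $y_j$ truncated to $b$ bits. Return $\hat{y}_s$. Algorithm PowerOf2Roots$(w,k,n,m,b)$: set $\hat{z}_1=$ SQRT$(w,n,m,b)$; for $i=2,\dots,k$ set $\hat{z}_i=$ SQRT$(\hat{z}_{i-1},m+b,m,b)$. Return $\hat{z}_1,\dots,\hat{z}_k$. Algorithm FractionalPower$(w,f,n,m,n_f,\ell)$ (input $w\geq1$, $f=\sum_{i=1}^{n_f}f_i2^{-i}$ or $f=1$, bits $f_i\in\{0,1\}$): set $b=\max\{n,n_f,\lceil 5(\ell+2m+\ln n_f)\rceil,40\}$. If $f=1$ return $w$; if $f=0$ return $1$. Let $\hat{w}_1,\dots,\hat{w}_{n_f}$ be the outputs of PowerOf2Roots$(w,n_f,n,m,b)$. Set $\hat{z}=1$; for $i=1,\dots,n_f$, if $f_i=1$ replace $\hat{z}$ by $\hat{z}\hat{w}_i$ truncated to $b$ bits after the binary point. Return $\hat{z}$. *)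

theory Defs
  imports Complex_Main
begin

definition trunc_bits :: "nat \<Rightarrow> real \<Rightarrow> real" where
  "trunc_bits b x = real_of_int \<lfloor>2 ^ b * x\<rfloor> / 2 ^ b"

definition sqrt_iters :: "nat \<Rightarrow> nat" where
  "sqrt_iters b = nat \<lceil>log 2 (real b)\<rceil>"

text \<open>Stage 1 of SQRT: approximating 1/w.\<close>
definition sqrt_p :: "real \<Rightarrow> nat" where
  "sqrt_p w = (THE p::nat. 2 powr real p > w \<and> w \<ge> 2 powr (real p - 1))"

fun sqrt_x :: "real \<Rightarrow> nat \<Rightarrow> nat \<Rightarrow> real" where
  "sqrt_x w b 0 = 2 powr (- real (sqrt_p w))"
| "sqrt_x w b (Suc i) =
     trunc_bits b (- w * (sqrt_x w b i)\<^sup>2 + 2 * sqrt_x w b i)"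

definition sqrt_q :: "real \<Rightarrow> nat" where
  "sqrt_q x = (THE q::nat. 2 powr (1 - real q) > x \<and> x \<ge> 2 powr (- real q))"

text \<open>Stage 2 of SQRT: inverse square root iteration applied to xs.\<close>
fun sqrt_y :: "real \<Rightarrow> nat \<Rightarrow> nat \<Rightarrow> real" where
  "sqrt_y xs b 0 = 2 powr (real_of_int \<lfloor>(real (sqrt_q xs) - 1) / 2\<rfloor>)"
| "sqrt_y xs b (Suc j) =
     trunc_bits b ((3 * sqrt_y xs b j - xs * (sqrt_y xs b j) ^ 3) / 2)"

text \<open>Algorithm SQRT(w,n,m,b); n and m only describe the input format.\<close>
definition SQRT :: "real \<Rightarrow> nat \<Rightarrow> nat \<Rightarrow> nat \<Rightarrow> real" where
  "SQRT w n m b =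
     (if w = 1 then 1
      else sqrt_y (sqrt_x w b (sqrt_iters b)) b (sqrt_iters b))"

text \<open>PowerOf2Roots(w,k,n,m,b): pow2_roots w n m b i is \<open>\<hat>z_(i+1)\<close>.\<close>
fun pow2_roots :: "real \<Rightarrow> nat \<Rightarrow> nat \<Rightarrow> nat \<Rightarrow> nat \<Rightarrow> real" where
  "pow2_roots w n m b 0 = SQRT w n m b"
| "pow2_roots w n m b (Suc i) = SQRT (pow2_roots w n m b i) (m + b) m b"

definition frac_bit :: "real \<Rightarrow> nat \<Rightarrow> int" where
  "frac_bit f i = \<lfloor>2 ^ i * f\<rfloor> mod 2"

definition fp_b :: "nat \<Rightarrow> nat \<Rightarrow> nat \<Rightarrow> nat \<Rightarrow> nat" where
  "fp_b n m nf l = Max {n, nf, nat \<lceil>5 * (real l + 2 * real m + ln (real nf))\<rceil>, 40}"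

text \<open>Product loop: fp_loop ... i is \<open>\<hat>z\<close> after processing bits 1..i.\<close>
fun fp_loop :: "real \<Rightarrow> real \<Rightarrow> nat \<Rightarrow> nat \<Rightarrow> nat \<Rightarrow> nat \<Rightarrow> real" where
  "fp_loop w f n m b 0 = 1"
| "fp_loop w f n m b (Suc i) =
     (if frac_bit f (Suc i) = 1
      then trunc_bits b (fp_loop w f n m b i * pow2_roots w n m b i)
      else fp_loop w f n m b i)"

definition FractionalPower :: "real \<Rightarrow> real \<Rightarrow> nat \<Rightarrow> nat \<Rightarrow> nat \<Rightarrow> nat \<Rightarrow> real" where
  "FractionalPower w f n m nf l =
     (let b = fp_b n m nf l in
      if f = 1 then w else if f = 0 then 1 else fp_loop w f n m b nf)"

end

theory Submission
  imports Defs "HOL-Analysis.Complex_Transcendental"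
begin


lemma ln2_gt: "ln (2::real) > 2/3"
proof -
  have "exp (2::real) = exp 1 * exp 1" by (simp add: exp_add[symmetric])
  also have "\<dots> < (272/100) * (272/100)" using e_less_272
    by (intro mult_strict_mono) auto
  also have "\<dots> < 8" by simp
  also have "(8::real) = exp (ln 8)" by simp
  also have "ln (8::real) = 3 * ln 2" using ln_realpow[of 2 3] by simp
  finally have "exp (2::real) < exp (3 * ln 2)" .
  thus ?thesis by simp
qed

lemma tb_le: "trunc_bits b x \<le> x"
  unfolding trunc_bits_def by (simp add: divide_le_eq mult.commute)

lemma tb_gt: "x - 1 / 2^b < trunc_bits b x"
proof -
  have "2^b * x < real_of_int \<lfloor>2 ^ b * x\<rfloor> + 1" by linarith
  hence "x < (real_of_int \<lfloor>2 ^ b * x\<rfloor> + 1) / 2^b" by (simp add: pos_less_divide_eq mult.commute)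
  thus ?thesis unfolding trunc_bits_def by (simp add: add_divide_distrib)
qed

lemma tb_ge_grid: assumes "2^b * g = real_of_int k" "g \<le> x" shows "g \<le> trunc_bits b x"
proof -
  have "real_of_int k \<le> 2^b * x" using assms mult_left_mono[of g x "2^b"] by simp
  hence "k \<le> \<lfloor>2 ^ b * x\<rfloor>" by (simp add: le_floor_iff)
  hence "real_of_int k \<le> real_of_int \<lfloor>2 ^ b * x\<rfloor>" by simp
  thus ?thesis unfolding trunc_bits_def using assms(1) by (simp add: field_simps)
qed

lemma tb_grid: "2^b * trunc_bits b x = real_of_int \<lfloor>2 ^ b * x\<rfloor>"
  unfolding trunc_bits_def by simp



lemma rec_x_half:
  fixes e :: "nat \<Rightarrow> real"
  assumes nn: "\<And>i. 0 \<le> e i" and e0: "e 0 \<le> 1/2"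
    and st: "\<And>i. e (Suc i) \<le> (e i)^2 + \<delta>" and d: "0 \<le> \<delta>" "\<delta> \<le> 1/18"
  shows "e i \<le> 1/2"
proof (induction i)
  case 0 then show ?case using e0 by simp
next
  case (Suc i)
  have "(e i)^2 \<le> (1/2)^2" using Suc nn[of i] by (intro power_mono) auto
  hence "(e i)^2 \<le> 1/4" by (simp add: power2_eq_square)
  then show ?case using st[of i] d by linarith
qed

lemma rec_x:
  fixes e :: "nat \<Rightarrow> real"
  assumes nn: "\<And>i. 0 \<le> e i" and e0: "e 0 \<le> 1/2"
    and st: "\<And>i. e (Suc i) \<le> (e i)^2 + \<delta>" and d: "0 \<le> \<delta>" "\<delta> \<le> 1/18"
  shows "e (Suc k) \<le> (1/2)^(2^(Suc k)) + 3*\<delta>"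
proof (induction k)
  case 0
  have "(e 0)^2 \<le> (1/2)^2" using e0 nn[of 0] by (intro power_mono) auto
  then show ?case using st[of 0] d by simp
next
  case (Suc k)
  define a :: real where "a = (1/2)^(2^(Suc k))"
  have a0: "0 \<le> a" unfolding a_def by simp
  have "a \<le> (1/2)^2" unfolding a_def
    by (rule power_decreasing) (auto simp: Suc_le_eq)
  hence a4: "a \<le> 1/4" by (simp add: power2_eq_square)
  have "(e (Suc k))^2 \<le> (a + 3*\<delta>)^2" using Suc nn[of "Suc k"] unfolding a_def[symmetric]
    by (intro power_mono) auto
  also have "\<dots> = a^2 + \<delta> * (6*a + 9*\<delta>)" by (simp add: power2_eq_square algebra_simps)
  also have "\<dots> \<le> a^2 + \<delta> * 2"
    using a4 d by (intro add_left_mono mult_left_mono) auto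
  finally have "e (Suc (Suc k)) \<le> a^2 + 3*\<delta>" using st[of "Suc k"] by simp
  moreover have "a^2 = (1/2)^(2^(Suc (Suc k)))" unfolding a_def
    by (simp add: power_mult[symmetric] mult.commute)
  ultimately show ?case by simp
qed

lemma rec_y:
  fixes e :: "nat \<Rightarrow> real"
  assumes nn: "\<And>i. 0 \<le> e i" and e0: "e 0 \<le> 3/4"
    and st: "\<And>i. e (Suc i) \<le> (e i)^2 + \<delta>" and d: "0 \<le> \<delta>" "\<delta> \<le> 1/1000"
  shows "e (k + 3) \<le> (1/8)^(2^k) + 3*\<delta>"
proof (induction k)
  case 0
  have "(e 0)^2 \<le> (3/4)^2" using e0 nn[of 0] by (intro power_mono) auto
  hence e1: "e 1 \<le> 9/16 + \<delta>" using st[of 0] by (simp add: power2_eq_square)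
  have "(e 1)^2 \<le> (9/16 + \<delta>)^2" using e1 nn[of 1] by (intro power_mono) auto
  also have "\<dots> \<le> (9/16 + 1/1000)^2" using d by (intro power_mono) auto
  finally have e2: "e 2 \<le> 1/3" using st[of 1] d by (simp add: numeral_2_eq_2 power2_eq_square)
  have "(e 2)^2 \<le> (1/3)^2" using e2 nn[of 2] by (intro power_mono) auto
  hence "e 3 \<le> 1/9 + \<delta>" using st[of 2] by (simp add: numeral_3_eq_3 numeral_2_eq_2 power2_eq_square)
  then show ?case using d by simp
next
  case (Suc k)
  define a :: real where "a = (1/8)^(2^k)"
  have a0: "0 \<le> a" unfolding a_def by simp
  have "a \<le> (1/8)^1" unfolding a_def
    by (rule power_decreasing) auto
  hence a4: "a \<le> 1/8" by simp
  have "(e (k+3))^2 \<le> (a + 3*\<delta>)^2" using Suc nn[of "k+3"] unfolding a_def[symmetric]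
    by (intro power_mono) auto
  also have "\<dots> = a^2 + \<delta> * (6*a + 9*\<delta>)" by (simp add: power2_eq_square algebra_simps)
  also have "\<dots> \<le> a^2 + \<delta> * 2"
    using a4 d by (intro add_left_mono mult_left_mono) auto
  finally have "e (Suc k + 3) \<le> a^2 + 3*\<delta>" using st[of "k+3"] by simp
  moreover have "a^2 = (1/8)^(2^(Suc k))" unfolding a_def
    by (simp add: power_mult[symmetric] mult.commute)
  ultimately show ?case by simp
qed



lemma exp2_floor:
  fixes x :: real assumes "0 < x"
  shows "2 powr real_of_int \<lfloor>log 2 x\<rfloor> \<le> x \<and> x < 2 powr (real_of_int \<lfloor>log 2 x\<rfloor> + 1)"
proof -
  have "2 powr real_of_int \<lfloor>log 2 x\<rfloor> \<le> 2 powr (log 2 x)" by (intro powr_mono) auto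
  moreover have "2 powr (log 2 x) < 2 powr (real_of_int \<lfloor>log 2 x\<rfloor> + 1)"
    by (intro powr_less_mono) linarith+
  ultimately show ?thesis using assms by simp
qed

lemma exp2_unique:
  fixes x :: real and k j :: real
  assumes "2 powr k \<le> x" "x < 2 powr (k+1)" "2 powr j \<le> x" "x < 2 powr (j+1)"
    and "k \<in> \<int>" "j \<in> \<int>"
  shows "k = j"
proof (rule ccontr)
  assume ne: "k \<noteq> j"
  obtain a b where a: "k = of_int a" and b: "j = of_int b" using assms(5,6) Ints_cases by metis
  show False
  proof (cases "a < b")
    case True
    hence "k + 1 \<le> j" using a b by simp
    hence "2 powr (k+1) \<le> 2 powr j" by simp
    thus False using assms by linarith
  next
    case False
    hence "b < a" using ne a b by simp
    hence "j + 1 \<le> k" using a b by simp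
    hence "2 powr (j+1) \<le> 2 powr k" by simp
    thus False using assms by linarith
  qed
qed

lemma sqrt_p_prop:
  fixes v :: real assumes "1 \<le> v"
  shows "2 powr real (sqrt_p v) > v \<and> v \<ge> 2 powr (real (sqrt_p v) - 1)"
proof -
  define P where "P = (\<lambda>p::nat. 2 powr real p > v \<and> v \<ge> 2 powr (real p - 1))"
  define k where "k = \<lfloor>log 2 v\<rfloor>"
  have k0: "0 \<le> k" unfolding k_def using assms by simp
  have "P (nat (k+1))" unfolding P_def using exp2_floor[of v] assms k0 unfolding k_def[symmetric]
    by (simp add: of_nat_nat)
  moreover have "p1 = p2" if "P p1" "P p2" for p1 p2
  proof -
    have "real p1 - 1 = real p2 - 1"
      by (rule exp2_unique[of "real p1 - 1" v "real p2 - 1"]) (use that in \<open>auto simp: P_def\<close>)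
    thus ?thesis by simp
  qed
  ultimately have "\<exists>!p. P p" by blast
  hence "P (THE p. P p)" by (rule theI')
  thus ?thesis unfolding sqrt_p_def P_def by simp
qed

lemma sqrt_q_prop:
  fixes x :: real assumes "0 < x" "x < 1"
  shows "2 powr (1 - real (sqrt_q x)) > x \<and> x \<ge> 2 powr (- real (sqrt_q x)) \<and> sqrt_q x \<ge> 1"
proof -
  define P where "P = (\<lambda>q::nat. 2 powr (1 - real q) > x \<and> x \<ge> 2 powr (- real q))"
  define k where "k = \<lfloor>log 2 x\<rfloor>"
  have "log 2 x < 0" using assms by simp
  hence k0: "k < 0" unfolding k_def by linarith
  have "P (nat (-k))" unfolding P_def using exp2_floor[of x] assms k0 unfolding k_def[symmetric]
    by (simp add: of_nat_nat add.commute)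
  moreover have "p1 = p2" if "P p1" "P p2" for p1 p2
  proof -
    have "- real p1 = - real p2"
      by (rule exp2_unique[of "- real p1" x "- real p2"]) (use that in \<open>auto simp: P_def add.commute\<close>)
    thus ?thesis by simp
  qed
  ultimately have "\<exists>!p. P p" by blast
  hence PT: "P (THE p. P p)" by (rule theI')
  have "sqrt_q x \<noteq> 0"
  proof
    assume "sqrt_q x = 0"
    hence "P 0" using PT unfolding sqrt_q_def P_def by simp
    thus False using assms unfolding P_def by simp
  qed
  thus ?thesis using PT unfolding sqrt_q_def P_def by simp
qed



lemma small_pow: assumes "v \<le> (2::real)^m" "10*m \<le> b" "40 \<le> b"
  shows "v / 2^b \<le> 1 / 2^36"
proof -
  have "v / 2^b \<le> 2^m / 2^b" using assms by (simp add: divide_right_mono)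
  also have "(2::real)^m / 2^b = 1 / 2^(b-m)"
    using assms by (simp add: power_diff)
  also have "\<dots> \<le> 1 / 2^36" using assms by (intro divide_left_mono power_increasing) auto
  finally show ?thesis .
qed

lemma xstage:
  fixes v :: real
  assumes v1: "1 < v" and vm: "v \<le> 2^m" and b40: "40 \<le> b" and bm: "10*m \<le> b"
  defines "\<epsilon> \<equiv> \<lambda>i. 1 - v * sqrt_x v b i"
  shows "0 \<le> \<epsilon> i \<and> \<epsilon> i \<le> 1/2"
    and "\<epsilon> (Suc k) \<le> (1/2)^(2^(Suc k)) + 3*(v/2^b)"
proof -
  have dl: "v/2^b \<le> 1/18" using small_pow[OF vm bm b40] by (rule order_trans) simp
  have d0: "0 \<le> v/2^b" using v1 by simp
  have p: "2 powr real (sqrt_p v) > v \<and> v \<ge> 2 powr (real (sqrt_p v) - 1)"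
    using sqrt_p_prop v1 by simp
  have e0: "0 \<le> \<epsilon> 0 \<and> \<epsilon> 0 \<le> 1/2"
  proof -
    have "v * 2 powr (- real (sqrt_p v)) < 1"
      using p by (simp add: powr_minus divide_simps)
    moreover have "2 powr (real (sqrt_p v) - 1) = 2 powr real (sqrt_p v) / 2"
      by (simp add: powr_diff)
    hence "v * 2 powr (- real (sqrt_p v)) \<ge> 1/2"
      using p by (simp add: powr_minus divide_simps)
    ultimately show ?thesis unfolding \<epsilon>_def by simp
  qed
  have step: "\<epsilon> (Suc i) \<le> (\<epsilon> i)^2 + v/2^b \<and> 0 \<le> \<epsilon> (Suc i)" for i
  proof -
    define X where "X = sqrt_x v b i"
    have XS: "sqrt_x v b (Suc i) = trunc_bits b (- v * X\<^sup>2 + 2 * X)" unfolding X_def by simp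
    have lo: "- v * X\<^sup>2 + 2 * X - 1/2^b < sqrt_x v b (Suc i)" unfolding XS by (rule tb_gt)
    have hi: "sqrt_x v b (Suc i) \<le> - v * X\<^sup>2 + 2 * X" unfolding XS by (rule tb_le)
    have "v * (- v * X\<^sup>2 + 2 * X - 1/2^b) \<le> v * sqrt_x v b (Suc i)"
      using lo v1 by (intro mult_left_mono) auto
    hence A: "\<epsilon> (Suc i) \<le> (\<epsilon> i)^2 + v/2^b"
      unfolding \<epsilon>_def X_def[symmetric] by (simp add: power2_eq_square algebra_simps)
    have "v * sqrt_x v b (Suc i) \<le> v * (- v * X\<^sup>2 + 2 * X)"
      using hi v1 by (intro mult_left_mono) auto
    moreover have "v * (- v * X\<^sup>2 + 2 * X) = 1 - (1 - v * X) ^ 2" by (simp add: power2_eq_square algebra_simps)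
    ultimately have "v * sqrt_x v b (Suc i) \<le> 1" by (smt (verit) zero_le_power2)
    thus ?thesis using A unfolding \<epsilon>_def by simp
  qed
  have nn: "0 \<le> \<epsilon> i" for i using e0 step by (cases i) auto
  show "0 \<le> \<epsilon> i \<and> \<epsilon> i \<le> 1/2"
    using nn rec_x_half[of \<epsilon> "v/2^b" i] e0 step d0 dl by auto
  show "\<epsilon> (Suc k) \<le> (1/2)^(2^(Suc k)) + 3*(v/2^b)"
    using nn rec_x[of \<epsilon> "v/2^b" k] e0 step d0 dl by auto
qed



lemma ystep:
  fixes x Y :: real
  assumes x0: "0 < x" and x1: "x \<le> 1" and Y0: "0 < Y" and grid: "2^b * Y = real_of_int z"
    and t1: "Y * sqrt x \<le> 1"
  defines "Y' \<equiv> trunc_bits b ((3 * Y - x * Y ^ 3) / 2)"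
  shows "Y \<le> Y'" "Y' * sqrt x \<le> 1" "1 - Y' * sqrt x \<le> 3/2 * (1 - Y * sqrt x)^2 + 1/2^b"
    "2^b * Y' = real_of_int \<lfloor>2 ^ b * ((3 * Y - x * Y ^ 3) / 2)\<rfloor>"
proof -
  define s where "s = sqrt x"
  define t where "t = Y * s"
  define g where "g = (3 * Y - x * Y ^ 3) / 2"
  have s0: "0 < s" and s1: "s \<le> 1" using x0 x1 unfolding s_def by auto
  have xs: "x = s^2" unfolding s_def using x0 by simp
  have t0: "0 \<le> t" unfolding t_def using Y0 s0 by simp
  have t1': "t \<le> 1" using t1 unfolding t_def s_def .
  have gs: "g * s = (3*t - t^3)/2" unfolding g_def t_def xs by (simp add: algebra_simps power2_eq_square power3_eq_cube)
  have "t \<le> (3*t - t^3)/2"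
  proof -
    have "t*t \<le> 1" using t0 t1' by (simp add: mult_le_one)
    hence "t*t*t \<le> 1 * t" using t0 by (intro mult_right_mono) auto
    hence "t^3 \<le> t" by (simp add: power3_eq_cube)
    thus ?thesis by simp
  qed
  hence "Y * s \<le> g * s" using gs unfolding t_def by simp
  hence Yg: "Y \<le> g" using s0 by simp
  show "Y \<le> Y'" unfolding Y'_def g_def[symmetric] by (rule tb_ge_grid[OF grid Yg])
  have hle: "(3*t - t^3)/2 \<le> 1"
  proof -
    have "0 \<le> (1-t)^2 * (2+t)" using t0 by simp
    moreover have "(1-t)^2 * (2+t) = 2 - 3*t + t^3" by (simp add: power2_eq_square power3_eq_cube algebra_simps)
    ultimately show ?thesis by simp
  qed
  have "Y' \<le> g" unfolding Y'_def g_def by (rule tb_le)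
  hence "Y' * s \<le> g * s" using s0 by (simp add: mult_right_mono)
  thus "Y' * sqrt x \<le> 1" using gs hle unfolding s_def by simp
  have "g - 1/2^b < Y'" unfolding Y'_def g_def by (rule tb_gt)
  hence "(g - 1/2^b) * s \<le> Y' * s" using s0 by (simp add: mult_right_mono)
  moreover have "(1/2^b) * s \<le> 1/2^b" using s1 by (simp add: divide_right_mono)
  ultimately have "g * s - 1/2^b \<le> Y' * s" by (simp add: left_diff_distrib)
  hence A: "1 - Y' * s \<le> 1 - (3*t - t^3)/2 + 1/2^b" using gs by simp
  have "1 - (3*t - t^3)/2 = (1-t)^2 * (2+t) / 2" by (simp add: power2_eq_square power3_eq_cube field_simps)
  also have "\<dots> \<le> (1-t)^2 * 3 / 2" using t1' by (intro divide_right_mono mult_left_mono) auto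
  finally have B: "1 - (3*t - t^3)/2 \<le> (1-t)^2 * 3 / 2" .
  have "1 - Y' * s \<le> 3/2 * (1 - t)^2 + 1/2^b" using A B by linarith
  thus "1 - Y' * sqrt x \<le> 3/2 * (1 - Y * sqrt x)^2 + 1/2^b" unfolding t_def s_def .
  show "2^b * Y' = real_of_int \<lfloor>2 ^ b * ((3 * Y - x * Y ^ 3) / 2)\<rfloor>" unfolding Y'_def by (rule tb_grid)
qed



lemma ystage:
  fixes x :: real
  assumes x0: "0 < x" and x1: "x < 1" and b40: "40 \<le> b"
  shows "1 \<le> sqrt_y x b j \<and> sqrt_y x b j * sqrt x \<le> 1 \<and> 1/2 \<le> sqrt_y x b j * sqrt x"
    and "3/2 * (1 - sqrt_y x b (k+3) * sqrt x) \<le> (1/8)^(2^k) + 3*(3/2/2^b)"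
proof -
  define Y where "Y = sqrt_y x b"
  have q: "2 powr (1 - real (sqrt_q x)) > x \<and> x \<ge> 2 powr (- real (sqrt_q x)) \<and> sqrt_q x \<ge> 1"
    using sqrt_q_prop[OF x0 x1] .
  define q where "q = sqrt_q x"
  define k0 where "k0 = \<lfloor>(real q - 1) / 2\<rfloor>"
  have k0nn: "0 \<le> k0" unfolding k0_def using q q_def by simp
  have k0a: "2 * real_of_int k0 \<le> real q - 1" unfolding k0_def using of_int_floor_le[of "(real q - 1)/2"] by (simp add: field_simps)
  have "k0 = (int q - 1) div 2" unfolding k0_def
    using floor_divide_of_int_eq[of "int q - 1" 2, where 'a=real] by simp
  hence "int q - 2 \<le> 2 * k0" by linarith
  hence k0b: "real q - 2 \<le> 2 * real_of_int k0" by linarith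
  have Y0: "Y 0 = 2 powr real_of_int k0" unfolding Y_def k0_def q_def by simp
  have kk: "real_of_int k0 = real (nat k0)" using k0nn by simp
  have Y0n: "Y 0 = 2 ^ nat k0" unfolding Y0 kk by (rule powr_realpow) simp
  have "(Y 0)^2 = 2 ^ (2 * nat k0)" unfolding Y0n by (simp add: power_mult[symmetric] mult.commute)
  also have "\<dots> = 2 powr real (2 * nat k0)" by (rule powr_realpow[symmetric]) simp
  also have "real (2 * nat k0) = 2 * real_of_int k0" using k0nn by simp
  finally have Y0sq: "(Y 0)^2 = 2 powr (2 * real_of_int k0)" .
  have "2 powr (-2) \<le> 2 powr (2 * real_of_int k0 - real q)" using k0b by (intro powr_mono) auto
  also have "\<dots> = 2 powr (2 * real_of_int k0) * 2 powr (- real q)"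
    by (simp add: powr_add[symmetric])
  also have "\<dots> \<le> (Y 0)^2 * x"
    using q unfolding Y0sq q_def by (intro mult_left_mono) auto
  finally have lo: "1/4 \<le> (Y 0)^2 * x" by (simp add: powr_minus powr_realpow[symmetric])
  have "(Y 0)^2 * x \<le> 2 powr (2 * real_of_int k0) * 2 powr (1 - real q)"
    using q unfolding Y0sq q_def by (intro mult_left_mono) auto
  also have "2 powr (2 * real_of_int k0) * 2 powr (1 - real q) = 2 powr (2 * real_of_int k0 + 1 - real q)"
    by (simp add: powr_add[symmetric] add_diff_eq)
  also have "\<dots> \<le> 2 powr 0" using k0a by (intro powr_mono) auto
  finally have hi: "(Y 0)^2 * x \<le> 1" by simp
  have t0eq: "Y 0 * sqrt x = sqrt ((Y 0)^2 * x)" using Y0 by (simp add: real_sqrt_mult)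
  have t0lo: "1/2 \<le> Y 0 * sqrt x"
  proof -
    have "sqrt (1/4) \<le> sqrt ((Y 0)^2 * x)" using lo by (rule real_sqrt_le_mono)
    moreover have "sqrt (1/4::real) = 1/2" by (simp add: real_sqrt_divide)
    ultimately show ?thesis unfolding t0eq by simp
  qed
  have t0hi: "Y 0 * sqrt x \<le> 1" unfolding t0eq using hi by simp
  have Y01: "1 \<le> Y 0" unfolding Y0n by simp
  have inv: "1 \<le> Y j \<and> Y j * sqrt x \<le> 1 \<and> (\<exists>z. 2^b * Y j = real_of_int z) \<and> Y 0 \<le> Y j" for j
  proof (induction j)
    case 0
    have "2^b * Y 0 = real_of_int (2^(b + nat k0))" unfolding Y0n by (simp add: power_add)
    then show ?case using Y01 t0hi by blast
  next
    case (Suc j)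
    then obtain z where z: "2^b * Y j = real_of_int z" by blast
    have YS: "Y (Suc j) = trunc_bits b ((3 * Y j - x * Y j ^ 3) / 2)" unfolding Y_def by simp
    have Yj0: "0 < Y j" using Suc.IH by linarith
    have tj: "Y j * sqrt x \<le> 1" using Suc.IH by blast
    have x1': "x \<le> 1" using x1 by simp
    note st = ystep[OF x0 x1' Yj0 z tj, folded YS]
    have a: "Y j \<le> Y (Suc j)" "Y (Suc j) * sqrt x \<le> 1"
      "2^b * Y (Suc j) = real_of_int \<lfloor>2 ^ b * ((3 * Y j - x * Y j ^ 3) / 2)\<rfloor>"
      using st by auto
    have "1 \<le> Y (Suc j)" "Y 0 \<le> Y (Suc j)" using a(1) Suc.IH by linarith+
    then show ?case using a(2,3) by blast
  qed
  have dstep: "3/2 * (1 - Y (Suc j) * sqrt x) \<le> (3/2 * (1 - Y j * sqrt x))^2 + 3/2/2^b" for j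
  proof -
    obtain z where z: "2^b * Y j = real_of_int z" using inv by blast
    have YS: "Y (Suc j) = trunc_bits b ((3 * Y j - x * Y j ^ 3) / 2)" unfolding Y_def by simp
    have Yj0: "0 < Y j" using inv[of j] by linarith
    have tj: "Y j * sqrt x \<le> 1" using inv[of j] by blast
    have x1': "x \<le> 1" using x1 by simp
    have "1 - Y (Suc j) * sqrt x \<le> 3/2 * (1 - Y j * sqrt x)^2 + 1/2^b"
      using ystep(3)[OF x0 x1' Yj0 z tj, folded YS] .
    hence "3/2 * (1 - Y (Suc j) * sqrt x) \<le> 3/2 * (3/2 * (1 - Y j * sqrt x)^2 + 1/2^b)" by simp
    also have "\<dots> = (3/2 * (1 - Y j * sqrt x))^2 + 3/2/2^b"
      by (simp only: power_mult_distrib) (simp add: field_simps)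
    finally show ?thesis .
  qed
  show "1 \<le> sqrt_y x b j \<and> sqrt_y x b j * sqrt x \<le> 1 \<and> 1/2 \<le> sqrt_y x b j * sqrt x"
  proof -
    have "Y 0 * sqrt x \<le> Y j * sqrt x" using inv[of j] x0 by (intro mult_right_mono) auto
    thus ?thesis using inv[of j] t0lo unfolding Y_def by auto
  qed
  have dl: "3/2/2^b \<le> (1/1000::real)"
  proof -
    have "(2::real)^40 \<le> 2^b" using b40 by (intro power_increasing) auto
    hence "1500 \<le> (2::real)^b" by simp
    hence "3/2/2^b \<le> 3/2/(1500::real)" by (intro divide_left_mono) auto
    thus ?thesis by simp
  qed
  have "3/2 * (1 - Y (k+3) * sqrt x) \<le> (1/8)^(2^k) + 3*(3/2/2^b)"
  proof -
    have nn: "0 \<le> 3/2 * (1 - Y i * sqrt x)" for i using inv[of i] by simp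
    have e0: "3/2 * (1 - Y 0 * sqrt x) \<le> 3/4" using t0lo by (simp add: mult.commute)
    have d0: "0 \<le> 3/2/(2::real)^b" by simp
    show ?thesis using rec_y[of "\<lambda>j. 3/2 * (1 - Y j * sqrt x)" "3/2/2^b" k, OF nn e0 dstep d0 dl] .
  qed
  thus "3/2 * (1 - sqrt_y x b (k+3) * sqrt x) \<le> (1/8)^(2^k) + 3*(3/2/2^b)" unfolding Y_def .
qed



definition rho :: "nat \<Rightarrow> nat \<Rightarrow> real" where
  "rho b m = 2 * (2 powr (-(3/8) * real b) + (6 + 3 * 2^m) / 2^b)"

lemma iters_ge: assumes "40 \<le> b" shows "real b \<le> 2 ^ sqrt_iters b" "3 \<le> sqrt_iters b"
proof -
  have lb: "log 2 (real b) \<le> real (sqrt_iters b)" unfolding sqrt_iters_def by linarith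
  have "real b = 2 powr (log 2 (real b))" using assms by simp
  also have "\<dots> \<le> 2 powr real (sqrt_iters b)" using lb by (intro powr_mono) auto
  finally show "real b \<le> 2 ^ sqrt_iters b" by (simp add: powr_realpow)
  have "2 powr (3::real) < real b" using assms by simp
  hence "3 < log 2 (real b)" using assms by (subst less_log_iff) auto
  thus "3 \<le> sqrt_iters b" unfolding sqrt_iters_def by linarith
qed

lemma eighth_pow: "(1/8::real)^(2^k) \<le> 2 powr (-(3/8) * 2^(k+3))"
proof -
  have "(1/8::real)^(2^k) = 1 / 2^(3 * 2^k)" by (simp add: power_mult power_one_over)
  also have "\<dots> = 2 powr (- real (3 * 2^k))"
    by (simp only: powr_minus powr_realpow[symmetric] divide_inverse)
  finally have "(1/8::real)^(2^k) = 2 powr (- (3 * 2^k))" by simp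
  also have "- (3 * 2^k) = -(3/8) * (2::real)^(k+3)" by (simp add: power_add)
  finally show ?thesis by simp
qed



lemma SQRT_main:
  fixes v :: real
  assumes v1: "1 \<le> v" and vm: "v \<le> 2^m" and b40: "40 \<le> b" and bm: "10*m \<le> b"
  shows "1 \<le> SQRT v n' m' b \<and> SQRT v n' m' b \<le> 2^m \<and> \<bar>SQRT v n' m' b - sqrt v\<bar> \<le> sqrt v * rho b m"
proof (cases "v = 1")
  case True
  have "0 \<le> rho b m" unfolding rho_def by simp
  thus ?thesis using True unfolding SQRT_def by simp
next
  case False
  hence v1': "1 < v" using v1 by simp
  define s where "s = sqrt_iters b"
  have s1: "real b \<le> 2^s" "3 \<le> s" using iters_ge[OF b40] unfolding s_def by auto
  define X where "X = sqrt_x v b s"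
  define \<epsilon> where "\<epsilon> = 1 - v * X"
  have sS: "s = Suc (s - 1)" using s1 by simp
  have eps: "0 \<le> \<epsilon> \<and> \<epsilon> \<le> 1/2" using xstage(1)[OF v1' vm b40 bm] unfolding \<epsilon>_def X_def by blast
  have eps2: "\<epsilon> \<le> (1/2)^(2^s) + 3*(v/2^b)"
  proof -
    have "1 - v * sqrt_x v b (Suc (s-1)) \<le> (1/2)^(2^(Suc (s-1))) + 3*(v/2^b)"
      using xstage(2)[OF v1' vm b40 bm, of "s-1"] by (simp only:)
    thus ?thesis unfolding \<epsilon>_def X_def sS[symmetric] .
  qed
  have "(1/2::real)^(2^s) \<le> (1/2)^b"
  proof -
    have "b \<le> 2^s" using s1(1) by (metis of_nat_le_iff of_nat_numeral of_nat_power)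
    thus ?thesis by (intro power_decreasing) auto
  qed
  hence eps3: "\<epsilon> \<le> 1/2^b + 3*(v/2^b)" using eps2 by (simp add: power_one_over)
  have vX: "v * X = 1 - \<epsilon>" unfolding \<epsilon>_def by simp
  have X0: "0 < X"
  proof -
    have "0 < v * X" using vX eps by simp
    thus ?thesis using v1' by (simp add: zero_less_mult_iff)
  qed
  have X1: "X < 1"
  proof -
    have "v * X \<le> 1 * 1" using vX eps by simp
    show ?thesis
    proof (rule ccontr)
      assume "\<not> X < 1"
      hence "1 * 1 < v * X" using v1' by (intro mult_less_le_imp_less) auto
      thus False using \<open>v * X \<le> 1 * 1\<close> by simp
    qed
  qed
  define y where "y = sqrt_y X b s"
  have Sy: "SQRT v n' m' b = y" unfolding SQRT_def y_def X_def s_def using False by simp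
  have yst: "1 \<le> y \<and> y * sqrt X \<le> 1 \<and> 1/2 \<le> y * sqrt X"
    using ystage(1)[OF X0 X1 b40] unfolding y_def by blast
  have s3: "s = (s - 3) + 3" using s1 by simp
  have d: "3/2 * (1 - y * sqrt X) \<le> (1/8)^(2^(s-3)) + 3*(3/2/2^b)"
    using ystage(2)[OF X0 X1 b40, of "s-3"] unfolding y_def s3[symmetric] .
  have "(1/8::real)^(2^(s-3)) \<le> 2 powr (-(3/8) * 2^s)" using eighth_pow[of "s-3"] unfolding s3[symmetric] .
  also have "\<dots> \<le> 2 powr (-(3/8) * real b)" using s1 by (intro powr_mono) auto
  finally have d2: "3/2 * (1 - y * sqrt X) \<le> 2 powr (-(3/8) * real b) + 9/2/2^b" using d by simp
  define \<sigma> where "\<sigma> = sqrt X"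
  have \<sigma>0: "0 < \<sigma>" unfolding \<sigma>_def using X0 by simp
  have invs: "1/\<sigma> = sqrt v / sqrt (1-\<epsilon>)"
  proof -
    have "X = (1-\<epsilon>)/v" using vX v1' by (simp add: field_simps)
    thus ?thesis unfolding \<sigma>_def by (simp add: real_sqrt_divide)
  qed
  have sq2: "sqrt (1-\<epsilon>) \<ge> 1/2"
  proof -
    have "sqrt (1/4) \<le> sqrt (1-\<epsilon>)" using eps by (intro real_sqrt_le_mono) auto
    moreover have "sqrt (1/4::real) = 1/2" by (simp add: real_sqrt_divide)
    ultimately show ?thesis by simp
  qed
  have inv2: "1/\<sigma> \<le> 2 * sqrt v"
  proof -
    have pos: "0 < sqrt (1-\<epsilon>)" using sq2 by linarith
    have "sqrt v * 1 \<le> sqrt v * (2 * sqrt (1-\<epsilon>))" using sq2 v1' by (intro mult_left_mono) auto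
    hence "sqrt v \<le> 2 * sqrt v * sqrt (1-\<epsilon>)" by simp
    thus ?thesis unfolding invs using pos by (simp add: pos_divide_le_eq)
  qed
  have se1: "1 - \<epsilon> \<le> sqrt (1-\<epsilon>)"
  proof -
    have "(1-\<epsilon>)^2 \<le> 1-\<epsilon>" using eps by (simp add: power2_eq_square mult_le_one mult_left_le)
    hence "sqrt ((1-\<epsilon>)^2) \<le> sqrt (1-\<epsilon>)" by (rule real_sqrt_le_mono)
    thus ?thesis using eps by simp
  qed
  have se2: "sqrt (1-\<epsilon>) \<le> 1" using eps by simp
  define t where "t = y * \<sigma>"
  have t1: "t \<le> 1" using yst unfolding t_def \<sigma>_def by simp
  have ydef: "y = t / \<sigma>" unfolding t_def using \<sigma>0 by simp
  have svdef: "sqrt v = sqrt (1-\<epsilon>) / \<sigma>"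
  proof -
    have pos: "sqrt (1-\<epsilon>) \<noteq> 0" using sq2 by linarith
    have "sqrt v = (1/\<sigma>) * sqrt (1-\<epsilon>)" unfolding invs using pos by simp
    thus ?thesis by simp
  qed
  have "\<bar>t - sqrt (1-\<epsilon>)\<bar> \<le> (1 - t) + \<epsilon>" using t1 se1 se2 by linarith
  also have "\<dots> \<le> 2 powr (-(3/8) * real b) + 9/2/2^b + (1/2^b + 3*(v/2^b))"
  proof -
    have "0 \<le> 1 - y * sqrt X" using t1 unfolding t_def \<sigma>_def by simp
    moreover have "\<And>a::real. 0 \<le> a \<Longrightarrow> a \<le> 3/2 * a" by linarith
    ultimately have "1 - y * sqrt X \<le> 3/2 * (1 - y * sqrt X)" by blast
    hence "1 - y * sqrt X \<le> 2 powr (-(3/8) * real b) + 9/2/2^b" using d2 by (rule order_trans)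
    hence "1 - t \<le> 2 powr (-(3/8) * real b) + 9/2/2^b" unfolding t_def \<sigma>_def .
    thus ?thesis using eps3 by (rule add_mono)
  qed
  also have "\<dots> \<le> 2 powr (-(3/8) * real b) + (6 + 3 * 2^m) / 2^b"
  proof -
    have "9/2/2^b + (1/2^b + 3*(v/2^b)) = (11/2 + 3 * v) / 2^b" by (simp add: field_simps)
    also have "\<dots> \<le> (6 + 3 * 2^m) / 2^b" using vm by (intro divide_right_mono) auto
    finally show ?thesis by simp
  qed
  also have "2 powr (-(3/8) * real b) + (6 + 3 * 2^m) / 2^b = rho b m / 2" unfolding rho_def by simp
  finally have A: "\<bar>t - sqrt (1-\<epsilon>)\<bar> \<le> rho b m / 2" .
  have "\<bar>y - sqrt v\<bar> = \<bar>t - sqrt (1-\<epsilon>)\<bar> * (1/\<sigma>)"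
    unfolding ydef svdef using \<sigma>0 by (simp add: diff_divide_distrib[symmetric] abs_divide)
  also have "\<dots> \<le> (rho b m / 2) * (2 * sqrt v)"
    using A inv2 \<sigma>0 by (intro mult_mono) (auto simp: rho_def)
  finally have err: "\<bar>y - sqrt v\<bar> \<le> sqrt v * rho b m" by (simp add: mult.commute)
  have m1: "1 \<le> m"
  proof (rule ccontr)
    assume "\<not> 1 \<le> m" hence "m = 0" by simp
    thus False using vm v1' by simp
  qed
  have yinv: "y \<le> 1/\<sigma>" unfolding ydef using t1 \<sigma>0 by (simp add: divide_right_mono)
  have "1/\<sigma> = sqrt (v / (1-\<epsilon>))" unfolding invs by (simp add: real_sqrt_divide)
  also have "\<dots> \<le> sqrt (2^(2*m))"
  proof (rule real_sqrt_le_mono)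
    have "v / (1-\<epsilon>) \<le> v / (1/2)" using eps v1' by (intro divide_left_mono) auto
    also have "\<dots> \<le> 2^m * 2" using vm by simp
    also have "(2::real)^m * 2 \<le> 2^(2*m)"
    proof -
      have "(2::real)^(Suc m) \<le> 2^(2*m)" using m1 by (intro power_increasing) auto
      thus ?thesis by (simp add: mult.commute)
    qed
    finally show "v / (1-\<epsilon>) \<le> 2^(2*m)" .
  qed
  also have "sqrt ((2::real)^(2*m)) = 2^m" by (simp add: power_mult real_sqrt_power)
  finally have "y \<le> 2^m" using yinv by simp
  thus ?thesis using Sy yst err by simp
qed



lemma sqrt_diff_le: assumes "1 \<le> a" "1 \<le> c" shows "\<bar>sqrt a - sqrt c\<bar> \<le> \<bar>a - c\<bar> / 2"
proof -
  have sa: "1 \<le> sqrt a" "1 \<le> sqrt c" using assms by auto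
  have "a - c = (sqrt a - sqrt c) * (sqrt a + sqrt c)" using assms by (simp add: algebra_simps)
  hence "\<bar>a - c\<bar> = \<bar>sqrt a - sqrt c\<bar> * (sqrt a + sqrt c)" using sa by (simp add: abs_mult)
  moreover have "\<bar>sqrt a - sqrt c\<bar> * 2 \<le> \<bar>sqrt a - sqrt c\<bar> * (sqrt a + sqrt c)"
    by (intro mult_left_mono) (use sa in linarith)+
  ultimately show ?thesis by simp
qed

lemma sqrt_le_self: assumes "1 \<le> (w::real)" shows "sqrt w \<le> w"
proof -
  have s1: "1 \<le> sqrt w" using assms by simp
  have "sqrt w * 1 \<le> sqrt w * sqrt w" by (intro mult_left_mono) (use s1 in linarith)+
  thus ?thesis using assms by simp
qed

lemma roots_chain:
  fixes w :: real
  assumes w1: "1 < w" and wm: "w \<le> 2^m" and b40: "40 \<le> b" and bm: "10*m \<le> b"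
  shows "1 \<le> pow2_roots w n m b i \<and> pow2_roots w n m b i \<le> 2^m \<and>
         \<bar>pow2_roots w n m b i - w powr (1/2^(Suc i))\<bar> \<le> 2 * (2^m * rho b m)"
proof (induction i)
  case 0
  have S: "1 \<le> SQRT w n m b \<and> SQRT w n m b \<le> 2^m \<and> \<bar>SQRT w n m b - sqrt w\<bar> \<le> sqrt w * rho b m"
    using SQRT_main[OF _ wm b40 bm] w1 by simp
  have r0: "0 \<le> rho b m" unfolding rho_def by simp
  have "sqrt w \<le> w" using w1 by (intro sqrt_le_self) simp
  hence "sqrt w \<le> 2^m" using wm by simp
  hence "sqrt w * rho b m \<le> 2^m * rho b m" using r0 by (intro mult_right_mono) auto
  moreover have "w powr (1/2^(Suc 0)) = sqrt w" using w1 by (simp add: powr_half_sqrt)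
  ultimately have h: "w powr (1/2^(Suc 0)) = sqrt w" "sqrt w * rho b m \<le> 2^m * rho b m" by simp_all
  have mr: "0 \<le> 2^m * rho b m" using r0 by simp
  have "\<bar>SQRT w n m b - w powr (1/2^(Suc 0))\<bar> \<le> 2 * (2^m * rho b m)"
    unfolding h(1) using S h(2) mr by linarith
  thus ?case using S by simp
next
  case (Suc i)
  define v where "v = pow2_roots w n m b i"
  define z where "z = w powr (1/2^(Suc i))"
  have v1: "1 \<le> v" and vm: "v \<le> 2^m" and ev: "\<bar>v - z\<bar> \<le> 2 * (2^m * rho b m)"
    using Suc unfolding v_def z_def by auto
  have S: "1 \<le> SQRT v (m+b) m b \<and> SQRT v (m+b) m b \<le> 2^m \<and> \<bar>SQRT v (m+b) m b - sqrt v\<bar> \<le> sqrt v * rho b m"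
    using SQRT_main[OF v1 vm b40 bm] .
  have r0: "0 \<le> rho b m" unfolding rho_def by simp
  have "sqrt v \<le> v" using v1 by (rule sqrt_le_self)
  hence "sqrt v \<le> 2^m" using vm by simp
  hence e1: "sqrt v * rho b m \<le> 2^m * rho b m" using r0 by (intro mult_right_mono) auto
  have z1: "1 \<le> z" unfolding z_def using w1 by (simp add: ge_one_powr_ge_zero)
  have zs: "w powr (1/2^(Suc (Suc i))) = sqrt z"
    unfolding z_def using w1 by (simp add: powr_half_sqrt[symmetric] powr_powr)
  have "\<bar>sqrt v - sqrt z\<bar> \<le> \<bar>v - z\<bar> / 2" by (rule sqrt_diff_le[OF v1 z1])
  also have "\<dots> \<le> 2^m * rho b m" using ev by simp
  finally have e2: "\<bar>sqrt v - sqrt z\<bar> \<le> 2^m * rho b m" .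
  have eq: "pow2_roots w n m b (Suc i) = SQRT v (m+b) m b" unfolding v_def by simp
  show ?case unfolding eq zs using S e1 e2 by linarith
qed



lemma floor_half: "\<lfloor>(x::real)\<rfloor> = \<lfloor>2 * x\<rfloor> div 2"
proof -
  define a where "a = \<lfloor>2 * x\<rfloor>"
  have a1: "real_of_int a \<le> 2 * x" "2 * x < real_of_int a + 1" unfolding a_def by linarith+
  have "2 * (a div 2) \<le> a" "a \<le> 2 * (a div 2) + 1" by presburger+
  hence "real_of_int (2 * (a div 2)) \<le> real_of_int a" "real_of_int a \<le> real_of_int (2 * (a div 2) + 1)"
    by (simp only: of_int_le_iff)+
  hence "real_of_int (a div 2) \<le> x" "x < real_of_int (a div 2) + 1" using a1 by simp_all
  thus ?thesis unfolding a_def[symmetric] by (intro floor_unique) auto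
qed

lemma bits_sum:
  "(\<Sum>i<k. (if frac_bit f (Suc i) = 1 then (1/2::real)^(Suc i) else 0))
     = real_of_int \<lfloor>2^k * f\<rfloor> / 2^k - real_of_int \<lfloor>f\<rfloor>"
proof (induction k)
  case 0 then show ?case by simp
next
  case (Suc k)
  define A where "A = \<lfloor>2^k * f\<rfloor>"
  define a where "a = \<lfloor>2^(Suc k) * f\<rfloor>"
  have "A = a div 2" unfolding A_def a_def using floor_half[of "2^k * f"] by (simp add: mult.assoc)
  hence aA: "a = 2 * A + a mod 2" by simp
  have fb: "frac_bit f (Suc k) = a mod 2" unfolding frac_bit_def a_def by simp
  have "real_of_int a / 2^(Suc k) = real_of_int A / 2^k + real_of_int (a mod 2) / 2^(Suc k)"
    by (subst aA) (simp add: field_simps)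
  moreover have "a mod 2 = 0 \<or> a mod 2 = 1" by presburger
  moreover have IH: "(\<Sum>i<k. (if frac_bit f (Suc i) = 1 then (1/2::real)^(Suc i) else 0))
     = real_of_int A / 2^k - real_of_int \<lfloor>f\<rfloor>" using Suc unfolding A_def .
  ultimately show ?case unfolding a_def[symmetric] sum.lessThan_Suc IH fb
    by (auto simp: power_one_over)
qed

lemma bits_exact:
  assumes "0 \<le> f" "f < 1" "2^k * f = real_of_int z"
  shows "(\<Sum>i<k. (if frac_bit f (Suc i) = 1 then (1/2::real)^(Suc i) else 0)) = f"
proof -
  have "\<lfloor>f\<rfloor> = 0" using assms by (simp add: floor_eq_iff)
  moreover have e: "real_of_int \<lfloor>2^k * f\<rfloor> = 2^k * f" using assms(3) by simp
  moreover have "real_of_int \<lfloor>2^k * f\<rfloor> / 2^k = f" by (simp only: e) simp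
  ultimately show ?thesis unfolding bits_sum by simp
qed

lemma powr_diff_le:
  fixes w a c :: real
  assumes w1: "1 < w" and c0: "0 \<le> c" and ca: "c \<le> a" and a1: "a \<le> 1"
  shows "w powr a - w powr c \<le> w * ln w * (a - c)"
proof -
  define d where "d = a - c"
  have d0: "0 \<le> d" unfolding d_def using ca by simp
  have lw: "0 < ln w" using w1 by simp
  have wa: "w powr a = w powr c * exp (d * ln w)" unfolding d_def
    by (simp add: powr_def exp_add[symmetric] algebra_simps)
  have "exp (d * ln w) - 1 \<le> d * ln w * exp (d * ln w)"
  proof -
    have "1 - d * ln w \<le> exp (- (d * ln w))" using exp_ge_add_one_self[of "- (d * ln w)"] by simp
    hence "(1 - d * ln w) * exp (d * ln w) \<le> exp (- (d * ln w)) * exp (d * ln w)"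
      by (intro mult_right_mono) auto
    thus ?thesis by (simp add: exp_minus field_simps)
  qed
  hence "w powr c * (exp (d * ln w) - 1) \<le> w powr c * (d * ln w * exp (d * ln w))"
    by (intro mult_left_mono) auto
  hence "w powr a - w powr c \<le> w powr c * (d * ln w * exp (d * ln w))"
    unfolding wa by (simp add: right_diff_distrib)
  also have "\<dots> = w powr a * ln w * d" unfolding wa by simp
  also have "\<dots> \<le> w * ln w * d"
  proof -
    have "w powr a \<le> w powr 1" using w1 a1 by (intro powr_mono) auto
    thus ?thesis using w1 lw d0 by (intro mult_right_mono) auto
  qed
  finally show ?thesis unfolding d_def .
qed

lemma powr_abs_diff:
  fixes w a c :: real
  assumes w1: "1 < w" "0 \<le> a" "a \<le> 1" "0 \<le> c" "c \<le> 1"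
  shows "\<bar>w powr a - w powr c\<bar> \<le> w * ln w * \<bar>a - c\<bar>"
proof (cases "c \<le> a")
  case True thus ?thesis using powr_diff_le[of w c a] assms
    by (smt (verit) powr_mono)
next
  case False thus ?thesis using powr_diff_le[of w a c] assms
    by (smt (verit) powr_mono)
qed



definition Gs :: "real \<Rightarrow> nat \<Rightarrow> real" where
  "Gs f k = (\<Sum>i<k. (if frac_bit f (Suc i) = 1 then (1/2::real)^(Suc i) else 0))"

lemma Gs_nn: "0 \<le> Gs f k" unfolding Gs_def by (intro sum_nonneg) auto

lemma tb_err: "\<bar>trunc_bits b x - x\<bar> \<le> 1/2^b"
  using tb_le[of b x] tb_gt[of x b] by linarith

lemma loop_bound:
  fixes w f E \<alpha> :: real
  assumes w1: "1 < w"
    and roots: "\<And>i. 1 \<le> pow2_roots w n m b i \<and> \<bar>pow2_roots w n m b i - w powr (1/2^(Suc i))\<bar> \<le> E"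
    and E0: "0 \<le> E" and \<alpha>: "\<alpha> = E + 1/2^b" and N\<alpha>: "real N * \<alpha> \<le> 1/2"
  shows "k \<le> N \<Longrightarrow> \<bar>fp_loop w f n m b k - w powr (Gs f k)\<bar> \<le> w powr (Gs f k) * (2 * real k * \<alpha>)"
proof (induction k)
  case 0 then show ?case using w1 by (simp add: Gs_def)
next
  case (Suc k)
  hence IH: "\<bar>fp_loop w f n m b k - w powr (Gs f k)\<bar> \<le> w powr (Gs f k) * (2 * real k * \<alpha>)" by simp
  define Z where "Z = fp_loop w f n m b k"
  define P where "P = w powr (Gs f k)"
  define T where "T = 2 * real k * \<alpha>"
  have a0: "0 \<le> \<alpha>" unfolding \<alpha> using E0 by simp
  have P1: "1 \<le> P" unfolding P_def using w1 Gs_nn by (simp add: ge_one_powr_ge_zero)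
  have T0: "0 \<le> T" unfolding T_def using a0 by simp
  have kN: "real k * \<alpha> \<le> 1/2"
  proof -
    have "real k * \<alpha> \<le> real N * \<alpha>" using Suc.prems a0 by (intro mult_right_mono) auto
    thus ?thesis using N\<alpha> by simp
  qed
  have IH': "\<bar>Z - P\<bar> \<le> P * T" using IH unfolding Z_def P_def T_def .
  have Tnext: "T + T * \<alpha> + \<alpha> \<le> 2 * real (Suc k) * \<alpha>"
  proof -
    have "T * \<alpha> = 2 * (real k * \<alpha>) * \<alpha>" unfolding T_def by simp
    also have "\<dots> \<le> 2 * (1/2) * \<alpha>" using kN a0 by (intro mult_right_mono) auto
    finally have "T * \<alpha> \<le> \<alpha>" by simp
    thus ?thesis unfolding T_def by (simp add: algebra_simps)
  qed
  show ?case
  proof (cases "frac_bit f (Suc k) = 1")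
    case True
    define zh where "zh = pow2_roots w n m b k"
    define z where "z = w powr (1/2^(Suc k))"
    have zh1: "1 \<le> zh" and ez: "\<bar>zh - z\<bar> \<le> E" using roots[of k] unfolding zh_def z_def by auto
    have z1: "1 \<le> z" unfolding z_def using w1 by (simp add: ge_one_powr_ge_zero)
    have G: "Gs f (Suc k) = Gs f k + 1/2^(Suc k)" unfolding Gs_def using True by (simp add: power_one_over)
    have Pn: "w powr (Gs f (Suc k)) = P * z" unfolding G P_def z_def by (simp add: powr_add)
    have Zn: "fp_loop w f n m b (Suc k) = trunc_bits b (Z * zh)" unfolding Z_def zh_def using True by simp
    have "\<bar>Z * zh - P * z\<bar> = \<bar>(Z - P) * zh + P * (zh - z)\<bar>" by (simp add: algebra_simps)
    also have "\<dots> \<le> \<bar>(Z - P) * zh\<bar> + \<bar>P * (zh - z)\<bar>" by (rule abs_triangle_ineq)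
    also have "\<dots> = \<bar>Z - P\<bar> * zh + P * \<bar>zh - z\<bar>" using zh1 P1 by (simp add: abs_mult)
    also have "\<dots> \<le> (P * T) * (z + E) + P * E"
      using IH' ez zh1 P1 T0 by (intro add_mono mult_mono mult_left_mono) auto
    also have "\<dots> = P * T * z + P * T * E + P * E" by (simp add: algebra_simps)
    also have "\<dots> \<le> P * T * z + P * T * z * E + P * z * E"
    proof -
      have "(P * T * E) * 1 \<le> (P * T * E) * z" using P1 T0 E0 z1 by (intro mult_left_mono) auto
      moreover have "(P * E) * 1 \<le> (P * E) * z" using P1 E0 z1 by (intro mult_left_mono) auto
      ultimately show ?thesis by (simp add: algebra_simps)
    qed
    finally have A: "\<bar>Z * zh - P * z\<bar> \<le> (P * z) * (T + T * E + E)" by (simp add: algebra_simps)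
    have Pz1: "1 * 1 \<le> P * z" using P1 z1 by (intro mult_mono) auto
    have "\<bar>trunc_bits b (Z * zh) - P * z\<bar> \<le> \<bar>trunc_bits b (Z * zh) - Z * zh\<bar> + \<bar>Z * zh - P * z\<bar>" by simp
    also have "\<dots> \<le> (P * z) * (1/2^b) + (P * z) * (T + T * E + E)"
    proof -
      have "1/2^b \<le> (P * z) * (1/2^b)" using Pz1 by (simp add: divide_right_mono)
      thus ?thesis using tb_err[of b "Z * zh"] A by linarith
    qed
    also have "\<dots> = (P * z) * (T + T * E + (E + 1/2^b))" by (simp add: algebra_simps)
    also have "\<dots> \<le> (P * z) * (T + T * \<alpha> + \<alpha>)"
    proof -
      have "T * E \<le> T * \<alpha>" unfolding \<alpha> using T0 by (intro mult_left_mono) auto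
      hence "T + T * E + (E + 1/2^b) \<le> T + T * \<alpha> + \<alpha>" unfolding \<alpha> by simp
      thus ?thesis using Pz1 by (intro mult_left_mono) auto
    qed
    also have "\<dots> \<le> (P * z) * (2 * real (Suc k) * \<alpha>)" using Tnext Pz1 by (intro mult_left_mono) auto
    finally show ?thesis unfolding Zn Pn .
  next
    case False
    have G: "Gs f (Suc k) = Gs f k" unfolding Gs_def using False by simp
    have Zn: "fp_loop w f n m b (Suc k) = Z" unfolding Z_def using False by simp
    have "T \<le> 2 * real (Suc k) * \<alpha>" unfolding T_def using a0 by (intro mult_right_mono) auto
    hence "P * T \<le> P * (2 * real (Suc k) * \<alpha>)" using P1 by (intro mult_left_mono) auto
    thus ?thesis unfolding Zn G using IH' unfolding P_def by simp
  qed
qed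



lemma geo: "(\<Sum>j\<in>{c - int k + 1 .. c}. (2::real) powr real_of_int j) = 2 powr real_of_int (c+1) - 2 powr real_of_int (c - int k + 1)"
proof (induction k)
  case 0 then show ?case by simp
next
  case (Suc k)
  have S: "{c - int (Suc k) + 1 .. c} = insert (c - int k) {c - int k + 1 .. c}" by auto
  have "(2::real) powr real_of_int (c - int k + 1) = 2 * 2 powr real_of_int (c - int k)"
    by (simp add: powr_add)
  thus ?case unfolding S using Suc by (simp add: sum.insert)
qed

lemma w_le: assumes "\<exists>d :: int \<Rightarrow> nat. (\<forall>j. d j \<le> 1) \<and>
             w = (\<Sum>j\<in>{int m - int n .. int m - 1}. real (d j) * 2 powr real_of_int j)"
  shows "w \<le> 2^m"
proof -
  obtain d :: "int \<Rightarrow> nat" where d: "\<forall>j. d j \<le> 1"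
    and w: "w = (\<Sum>j\<in>{int m - int n .. int m - 1}. real (d j) * 2 powr real_of_int j)" using assms by blast
  have "w \<le> (\<Sum>j\<in>{int m - int n .. int m - 1}. (2::real) powr real_of_int j)"
    unfolding w using d by (intro sum_mono) (simp add: mult_le_cancel_right1)
  also have "{int m - int n .. int m - 1} = {(int m - 1) - int n + 1 .. int m - 1}" by auto
  also have "(\<Sum>j\<in>\<dots>. (2::real) powr real_of_int j) = 2 powr (int m - 1 + 1) - 2 powr ((int m - 1) - int n + 1)"
    by (rule geo)
  also have "\<dots> \<le> 2 powr real_of_int (int m - 1 + 1)" by simp
  also have "real_of_int (int m - 1 + 1) = real m" by simp
  finally show ?thesis by (simp add: powr_realpow)
qed

lemma key_arith:
  fixes b nf m l :: nat
  assumes b40: "40 \<le> b" and nf1: "1 \<le> nf" and m1: "1 \<le> m"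
    and bB: "5 * (real l + 2 * real m + ln (real nf)) \<le> real b"
  shows "5 * real nf * 2 powr (2 * real m - 3/8 * real b) \<le> 2 powr (- real l - 1)"
proof -
  have L0: "0 \<le> ln (real nf)" using nf1 by simp
  have "log 2 (real nf) = ln (real nf) / ln 2" by (simp add: log_def)
  also have "\<dots> \<le> ln (real nf) / (2/3)" using L0 ln2_gt by (intro divide_left_mono) auto
  finally have lg: "log 2 (real nf) \<le> 3/2 * ln (real nf)" by simp
  have "5 * real nf * 2 powr (2 * real m - 3/8 * real b) \<le> 2 powr 3 * 2 powr (log 2 (real nf)) * 2 powr (2 * real m - 3/8 * real b)"
    using nf1 by (intro mult_right_mono) auto
  also have "\<dots> = 2 powr (3 + log 2 (real nf) + (2 * real m - 3/8 * real b))" by (simp add: powr_add)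
  also have "\<dots> \<le> 2 powr (- real l - 1)" using lg bB b40 m1 by (intro powr_mono) auto
  finally show ?thesis .
qed

lemma alpha_bound:
  fixes b m :: nat
  assumes b40: "40 \<le> b" and bm: "10 * m \<le> b"
  shows "2 * (2^m * rho b m) + 1/2^b \<le> 5 * 2 powr real m * 2 powr (-(3/8) * real b)"
proof -
  define X where "X = (2::real) powr real m"
  define T where "T = (2::real) powr (-(3/8) * real b)"
  have X1: "1 \<le> X" unfolding X_def by (simp add: ge_one_powr_ge_zero)
  have Xm: "(2::real)^m = X" unfolding X_def by (simp add: powr_realpow)
  have Bb: "1/(2::real)^b = 2 powr (- real b)" by (simp add: powr_minus powr_realpow divide_inverse)
  have "2 * (2^m * rho b m) + 1/2^b = 4 * X * T + (4 * X * (6 + 3 * X) + 1) * 2 powr (- real b)"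
    unfolding rho_def Xm T_def Bb[symmetric] by (simp add: algebra_simps add_divide_distrib)
  also have "(4 * X * (6 + 3 * X) + 1) \<le> 2 powr 6 * (X * X)"
  proof -
    have "1 * 1 \<le> X * X" using X1 by (intro mult_mono) auto
    hence a: "1 \<le> X * X" by simp
    have b: "X \<le> X * X" using X1 by (simp add: mult_le_cancel_left1)
    have c: "4*X*(6+3*X) + 1 = 24*X + 12*(X*X) + 1" by (simp add: algebra_simps)
    have p6: "(2::real) powr 6 = 64" by simp
    show ?thesis unfolding p6 c using a b by linarith
  qed
  hence "(4 * X * (6 + 3 * X) + 1) * 2 powr (- real b) \<le> 2 powr 6 * (X * X) * 2 powr (- real b)"
    by (intro mult_right_mono) auto
  also have "2 powr 6 * (X * X) * 2 powr (- real b) = 2 powr (6 + 2 * real m - real b)"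
  proof -
    have "X * X = 2 powr (real m + real m)" unfolding X_def by (simp only: powr_add)
    hence "2 powr 6 * (X * X) * 2 powr (- real b) = 2 powr (6 + (real m + real m) + - real b)"
      by (simp only: powr_add)
    thus ?thesis by simp
  qed
  also have "\<dots> \<le> 2 powr (real m + (-(3/8) * real b))" using b40 bm by (intro powr_mono) auto
  also have "\<dots> = X * T" unfolding X_def T_def by (simp only: powr_add)
  finally show ?thesis unfolding X_def[symmetric] T_def[symmetric] by (simp add: mult.commute mult.left_commute)
qed



lemma half_powr: "(1/2::real) powr x = 2 powr (- x)"
  by (simp add: powr_divide powr_minus_divide)

theorem corollary2:
  fixes n m nf l :: nat and w F f :: real
  assumes w_repr: "\<exists>d :: int \<Rightarrow> nat. (\<forall>j. d j \<le> 1) \<and>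
             w = (\<Sum>j\<in>{int m - int n .. int m - 1}. real (d j) * 2 powr real_of_int j)"
    and w_gt: "w > 1"
    and F_range: "0 \<le> F" "F \<le> 1"
    and f_range: "0 \<le> f" "f \<le> 1"
    and f_repr: "f = 1 \<or> (\<exists>fb :: nat \<Rightarrow> nat. (\<forall>i. fb i \<le> 1) \<and>
                    f = (\<Sum>i=1..nf. real (fb i) * 2 powr (- real i)))"
    and Ff: "\<bar>F - f\<bar> \<le> 2 powr (- real nf)"
  shows "\<bar>FractionalPower w f n m nf l - w powr F\<bar>
           \<le> (1/2) powr (real l - 1) + w * ln w / 2 ^ nf"
proof -
  define b where "b = fp_b n m nf l"
  have FP: "FractionalPower w f n m nf l = (if f = 1 then w else if f = 0 then 1 else fp_loop w f n m b nf)"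
    unfolding FractionalPower_def b_def Let_def by simp
  have wm: "w \<le> 2^m" by (rule w_le[OF w_repr])
  have lnw: "0 < ln w" using w_gt by simp
  have P0: "0 \<le> (1/2::real) powr (real l - 1)" by simp
  have pnf: "(2::real) powr (- real nf) = 1 / 2^nf" by (simp add: powr_minus_divide powr_realpow)
  have mvt: "\<bar>w powr f - w powr F\<bar> \<le> w * ln w / 2^nf"
  proof -
    have "\<bar>w powr f - w powr F\<bar> \<le> w * ln w * \<bar>f - F\<bar>"
      by (rule powr_abs_diff) (use w_gt F_range f_range in auto)
    also have "\<dots> \<le> w * ln w * (1/2^nf)" using Ff pnf w_gt lnw
      by (intro mult_left_mono) (auto simp: abs_minus_commute)
    finally show ?thesis by simp
  qed
  show ?thesis
  proof (cases "f = 1 \<or> f = 0")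
    case True
    have eq: "FractionalPower w f n m nf l = w powr f" using True FP w_gt by auto
    show ?thesis unfolding eq using mvt P0 by linarith
  next
    case False
    hence f1: "f < 1" and fne1: "f \<noteq> 1" and fne0: "f \<noteq> 0" using f_range by auto
    obtain fb :: "nat \<Rightarrow> nat" where fb: "\<forall>i. fb i \<le> 1"
      and fsum: "f = (\<Sum>i=1..nf. real (fb i) * 2 powr (- real i))" using f_repr fne1 by blast
    have nf1: "1 \<le> nf"
    proof (rule ccontr)
      assume "\<not> 1 \<le> nf" hence "nf = 0" by simp
      thus False using fsum fne0 by simp
    qed
    have "2^nf * f = (\<Sum>i=1..nf. real (fb i) * (2^nf * 2 powr (- real i)))"
      unfolding fsum by (simp add: sum_distrib_left algebra_simps)
    also have "\<dots> = (\<Sum>i=1..nf. real (fb i) * 2^(nf - i))"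
    proof (rule sum.cong)
      fix i assume "i \<in> {1..nf}"
      hence inf: "i \<le> nf" by simp
      have "(2::real)^nf = 2^(nf - i) * 2^i" using inf by (simp add: power_add[symmetric])
      moreover have "(2::real)^i * 2 powr (- real i) = 1" by (simp add: powr_minus_divide powr_realpow)
      ultimately have "(2::real)^nf * 2 powr (- real i) = 2^(nf - i)" by (simp add: mult.assoc)
      thus "real (fb i) * (2^nf * 2 powr (- real i)) = real (fb i) * 2^(nf - i)" by simp
    qed simp
    also have "\<dots> = real_of_int (int (\<Sum>i=1..nf. fb i * 2^(nf - i)))" by simp
    finally have fint: "2^nf * f = real_of_int (int (\<Sum>i=1..nf. fb i * 2^(nf - i)))" .
    have Gf: "Gs f nf = f" unfolding Gs_def by (rule bits_exact[OF f_range(1) f1 fint])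
    have fin: "finite {n, nf, nat \<lceil>5 * (real l + 2 * real m + ln (real nf))\<rceil>, 40}" by simp
    have b40: "40 \<le> b" unfolding b_def fp_b_def by (rule Max_ge[OF fin]) simp
    have bc: "nat \<lceil>5 * (real l + 2 * real m + ln (real nf))\<rceil> \<le> b" unfolding b_def fp_b_def
      by (rule Max_ge[OF fin]) simp
    have bB: "5 * (real l + 2 * real m + ln (real nf)) \<le> real b"
    proof -
      have "5 * (real l + 2 * real m + ln (real nf)) \<le> real (nat \<lceil>5 * (real l + 2 * real m + ln (real nf))\<rceil>)"
        by linarith
      also have "\<dots> \<le> real b" using bc by simp
      finally show ?thesis .
    qed
    have lnnf: "0 \<le> ln (real nf)" using nf1 by simp
    have "real (10 * m) \<le> real b" using bB lnnf by simp
    hence bm: "10 * m \<le> b" by (simp only: of_nat_le_iff)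
    have m1: "1 \<le> m"
    proof (rule ccontr)
      assume "\<not> 1 \<le> m" hence "m = 0" by simp
      thus False using wm w_gt by simp
    qed
    define E where "E = 2 * (2^m * rho b m)"
    define \<alpha> where "\<alpha> = E + 1/2^b"
    define X where "X = (2::real) powr real m"
    define T where "T = (2::real) powr (-(3/8) * real b)"
    have X1: "1 \<le> X" unfolding X_def by (simp add: ge_one_powr_ge_zero)
    have T0: "0 \<le> T" unfolding T_def by simp
    have wX: "w \<le> X" using wm unfolding X_def by (simp add: powr_realpow)
    have E0: "0 \<le> E" unfolding E_def rho_def by simp
    have aB: "\<alpha> \<le> 5 * X * T" unfolding \<alpha>_def E_def X_def T_def by (rule alpha_bound[OF b40 bm])
    have XXT: "X * X * T = 2 powr (2 * real m - 3/8 * real b)"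
    proof -
      have "X * X * T = 2 powr (real m + real m + (-(3/8) * real b))" unfolding X_def T_def
        by (simp only: powr_add)
      thus ?thesis by simp
    qed
    have key: "5 * real nf * (X * X * T) \<le> 2 powr (- real l - 1)"
      unfolding XXT by (rule key_arith[OF b40 nf1 m1 bB])
    have XT: "X * T \<le> X * X * T"
    proof -
      have "1 * (X * T) \<le> X * (X * T)" using X1 T0 by (intro mult_right_mono) auto
      thus ?thesis by (simp add: mult.assoc)
    qed
    have nfa1: "real nf * \<alpha> \<le> 5 * real nf * (X * T)"
    proof -
      have "real nf * \<alpha> \<le> real nf * (5 * X * T)" using aB by (intro mult_left_mono) auto
      thus ?thesis by (simp add: mult.assoc mult.left_commute)
    qed
    have nfa: "real nf * \<alpha> \<le> 5 * real nf * (X * X * T)"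
    proof -
      have "5 * real nf * (X * T) \<le> 5 * real nf * (X * X * T)" using XT by (intro mult_left_mono) auto
      thus ?thesis using nfa1 by linarith
    qed
    have l1: "2 powr (- real l - 1) \<le> (1/2::real)"
    proof -
      have "2 powr (- real l - 1) \<le> 2 powr (-1::real)" by (intro powr_mono) auto
      thus ?thesis by (simp add: powr_minus_divide)
    qed
    have Na: "real nf * \<alpha> \<le> 1/2" using nfa key l1 by linarith
    have roots: "\<And>i. 1 \<le> pow2_roots w n m b i \<and> \<bar>pow2_roots w n m b i - w powr (1/2^(Suc i))\<bar> \<le> E"
      using roots_chain[OF w_gt wm b40 bm] unfolding E_def by blast
    have LB: "\<bar>fp_loop w f n m b nf - w powr (Gs f nf)\<bar> \<le> w powr (Gs f nf) * (2 * real nf * \<alpha>)"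
      by (rule loop_bound[OF w_gt roots E0 \<alpha>_def Na]) simp
    have wf: "w powr f \<le> w"
    proof -
      have "w powr f \<le> w powr 1" using w_gt f_range by (intro powr_mono) auto
      thus ?thesis using w_gt by simp
    qed
    have a0: "0 \<le> \<alpha>" unfolding \<alpha>_def using E0 by simp
    have n0: "0 \<le> 2 * real nf * \<alpha>" using a0 by simp
    have "\<bar>fp_loop w f n m b nf - w powr f\<bar> \<le> w powr f * (2 * real nf * \<alpha>)" using LB unfolding Gf .
    also have "\<dots> \<le> X * (2 * (5 * real nf * (X * T)))"
    proof -
      have h1: "2 * real nf * \<alpha> \<le> 2 * (5 * real nf * (X * T))" using nfa1 by linarith
      have h2: "w powr f \<le> X" using wf wX by simp
      have h3: "0 \<le> X" using X1 by simp
      show ?thesis by (rule mult_mono[OF h2 h1 h3 n0])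
    qed
    also have "\<dots> = 2 * (5 * real nf * (X * X * T))" by (simp add: algebra_simps)
    also have "\<dots> \<le> 2 * 2 powr (- real l - 1)" using key by linarith
    also have "\<dots> = 2 powr (- real l)" by (simp add: powr_diff)
    also have "\<dots> \<le> 2 powr (1 - real l)" by (intro powr_mono) auto
    also have "\<dots> = (1/2) powr (real l - 1)" by (simp add: half_powr)
    finally have A: "\<bar>fp_loop w f n m b nf - w powr f\<bar> \<le> (1/2) powr (real l - 1)" .
    have "FractionalPower w f n m nf l = fp_loop w f n m b nf" using FP fne1 fne0 by simp
    thus ?thesis using A mvt by linarith
  qed
qed


end
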